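(* Let $G$ be a simple graph of order $n$ and let $\alpha\ge2$ be an integer. If $\lambda(G)\le\frac{n}{\alpha}$, then $$i_\alpha(G)\ge\left(\frac{1}{\alpha(\alpha-1)}-\frac{1}{n}\right)\frac{(\alpha-1)(\alpha-2)}{\alpha}\left(\frac{n}{\alpha-1}\right)^{\alpha}.$$
   Context: $\lambda(G)$ is the spectral radius of the adjacency matrix of $G$. For a positive integer $s$, $i_s(G)$ denotes the number of independent sets of size $s$ in $G$. *)

theory Defs
  imports "Jordan_Normal_Form.Spectral_Radius"
begin

definition simple_graph :: "nat \<Rightarrow> (nat \<Rightarrow> nat \<Rightarrow> bool) \<Rightarrow> bool" where
  "simple_graph n E \<longleftrightarrow> (\<forall>u<n. \<forall>v<n. E u v \<longleftrightarrow> E v u) \<and> (\<forall>v<n. \<not> E v v)"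

definition adj_matrix :: "nat \<Rightarrow> (nat \<Rightarrow> nat \<Rightarrow> bool) \<Rightarrow> complex mat" where
  "adj_matrix n E = mat n n (\<lambda>(i, j). if E i j then 1 else 0)"

definition graph_spectral_radius :: "nat \<Rightarrow> (nat \<Rightarrow> nat \<Rightarrow> bool) \<Rightarrow> real" where
  "graph_spectral_radius n E = spectral_radius (adj_matrix n E)"

definition independent_set :: "nat \<Rightarrow> (nat \<Rightarrow> nat \<Rightarrow> bool) \<Rightarrow> nat set \<Rightarrow> bool" where
  "independent_set n E S \<longleftrightarrow> S \<subseteq> {0..<n} \<and> (\<forall>u\<in>S. \<forall>v\<in>S. \<not> E u v)"

definition num_indep_sets :: "nat \<Rightarrow> (nat \<Rightarrow> nat \<Rightarrow> bool) \<Rightarrow> nat \<Rightarrow> nat" where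
  "num_indep_sets n E s = card {S. independent_set n E S \<and> card S = s}"

end

theory Submission
  imports Defs
begin


definition clq :: "nat \<Rightarrow> (nat \<Rightarrow> nat \<Rightarrow> bool) \<Rightarrow> nat \<Rightarrow> nat set set" where
  "clq n F s = {S. S \<subseteq> {0..<n} \<and> card S = s \<and> (\<forall>u\<in>S. \<forall>v\<in>S. u \<noteq> v \<longrightarrow> F u v)}"

definition cn :: "nat \<Rightarrow> (nat \<Rightarrow> nat \<Rightarrow> bool) \<Rightarrow> nat set \<Rightarrow> nat set" where
  "cn n F R = {w\<in>{0..<n}. w \<notin> R \<and> (\<forall>u\<in>R. F u w)}"

lemma finite_clq: "finite (clq n F s)"
proof -
  have "clq n F s \<subseteq> Pow {0..<n}" unfolding clq_def by auto
  thus ?thesis by (rule finite_subset) simp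
qed

lemma finite_cn: "finite (cn n F R)"
  unfolding cn_def by simp

lemma L1:
  assumes sym: "\<And>u v. F u v = F v u"
  shows "(\<Sum>R\<in>clq n F s. \<Sum>v\<in>cn n F R. g R v) = (\<Sum>S\<in>clq n F (Suc s). \<Sum>v\<in>S. g (S - {v}) v)"
proof -
  have finS: "\<And>S. S \<in> clq n F t \<Longrightarrow> finite S" for t
    unfolding clq_def by (auto intro: finite_subset)
  have "(\<Sum>R\<in>clq n F s. \<Sum>v\<in>cn n F R. g R v) = (\<Sum>(R,v)\<in>(SIGMA R:clq n F s. cn n F R). g R v)"
    by (rule sum.Sigma) (auto simp: finite_clq finite_cn)
  also have "\<dots> = (\<Sum>(S,v)\<in>(SIGMA S:clq n F (Suc s). S). g (S - {v}) v)"
  proof -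
    let ?h = "\<lambda>(R,v). (insert v R, v::nat)"
    have bij: "bij_betw ?h (SIGMA R:clq n F s. cn n F R) (SIGMA S:clq n F (Suc s). S)"
    proof (rule bij_betw_byWitness[where f'="\<lambda>(S,v). (S - {v}, v)"])
      show "\<forall>a\<in>(SIGMA R:clq n F s. cn n F R). (\<lambda>(S,v). (S - {v}, v)) (?h a) = a"
        unfolding cn_def by auto
      show "\<forall>a\<in>(SIGMA S:clq n F (Suc s). S). ?h ((\<lambda>(S,v). (S - {v}, v)) a) = a"
        by auto
      show "?h ` (SIGMA R:clq n F s. cn n F R) \<subseteq> (SIGMA S:clq n F (Suc s). S)"
      proof safe
        fix R v assume R: "R \<in> clq n F s" and v: "v \<in> cn n F R"
        have fR: "finite R" using finS[OF R] .
        from v have vR: "v \<notin> R" and vn: "v < n" and adj: "\<forall>u\<in>R. F u v" unfolding cn_def by auto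
        show "insert v R \<in> clq n F (Suc s)"
          using R vR vn adj fR unfolding clq_def by (auto simp: sym)
      qed
      show "(\<lambda>(S,v). (S - {v}, v)) ` (SIGMA S:clq n F (Suc s). S) \<subseteq> (SIGMA R:clq n F s. cn n F R)"
      proof safe
        fix S v assume S: "S \<in> clq n F (Suc s)" and v: "v \<in> S"
        have fS: "finite S" using finS[OF S] .
        show "S - {v} \<in> clq n F s"
          using S v fS unfolding clq_def by (auto simp: card_Diff_singleton)
        show "v \<in> cn n F (S - {v})"
          using S v unfolding clq_def cn_def by auto
      qed
    qed
    have "(\<Sum>(R,v)\<in>(SIGMA R:clq n F s. cn n F R). g R v)
        = (\<Sum>x\<in>(SIGMA R:clq n F s. cn n F R). (\<lambda>(S,v). g (S - {v}) v) (?h x))"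
      by (rule sum.cong) (auto simp: cn_def intro!: arg_cong2[where f=g])
    also have "\<dots> = (\<Sum>(S,v)\<in>(SIGMA S:clq n F (Suc s). S). g (S - {v}) v)"
      by (rule sum.reindex_bij_betw[OF bij])
    finally show ?thesis .
  qed
  also have "\<dots> = (\<Sum>S\<in>clq n F (Suc s). \<Sum>v\<in>S. g (S - {v}) v)"
    by (rule sum.Sigma[symmetric]) (auto simp: finite_clq finS)
  finally show ?thesis .
qed

lemma perw:
  assumes S: "S \<in> clq n F (Suc s)" and w: "w < n"
  shows "card {v\<in>S. w \<in> cn n F (S - {v})} \<le> (if w \<in> cn n F S then Suc s else 1)"
proof -
  have fS: "finite S" using S unfolding clq_def by (auto intro: finite_subset)
  show ?thesis
  proof (cases "w \<in> cn n F S")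
    case True
    have "card {v\<in>S. w \<in> cn n F (S - {v})} \<le> card S" by (rule card_mono[OF fS]) auto
    thus ?thesis using True S unfolding clq_def by simp
  next
    case False
    show ?thesis
    proof (cases "w \<in> S")
      case True
      have "{v\<in>S. w \<in> cn n F (S - {v})} \<subseteq> {w}" using True unfolding cn_def by auto
      hence "card {v\<in>S. w \<in> cn n F (S - {v})} \<le> card {w}" by (rule card_mono[rotated]) simp
      thus ?thesis using False by simp
    next
      case wS: False
      with False w obtain u where u: "u \<in> S" "\<not> F u w" unfolding cn_def by auto
      have "{v\<in>S. w \<in> cn n F (S - {v})} \<subseteq> {u}" using u unfolding cn_def by auto
      hence "card {v\<in>S. w \<in> cn n F (S - {v})} \<le> card {u}" by (rule card_mono[rotated]) simp
      thus ?thesis using False by simp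
    qed
  qed
qed

lemma perS:
  assumes S: "S \<in> clq n F (Suc s)"
  shows "(\<Sum>v\<in>S. card (cn n F (S - {v}))) \<le> n + s * card (cn n F S)"
proof -
  have fS: "finite S" using S unfolding clq_def by (auto intro: finite_subset)
  have c: "card (cn n F X) = (\<Sum>w\<in>{0..<n}. if w \<in> cn n F X then 1 else 0)" for X
  proof -
    have "cn n F X = {w\<in>{0..<n}. w \<in> cn n F X}" unfolding cn_def by auto
    hence "card (cn n F X) = (\<Sum>w\<in>{w\<in>{0..<n}. w \<in> cn n F X}. 1)" by simp
    also have "\<dots> = (\<Sum>w\<in>{0..<n}. if w \<in> cn n F X then 1 else 0)"
      by (rule sum.inter_filter) simp
    finally show ?thesis .
  qed
  have "(\<Sum>v\<in>S. card (cn n F (S - {v}))) = (\<Sum>v\<in>S. \<Sum>w\<in>{0..<n}. if w \<in> cn n F (S - {v}) then 1 else 0)"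
    by (simp add: c)
  also have "\<dots> = (\<Sum>w\<in>{0..<n}. \<Sum>v\<in>S. if w \<in> cn n F (S - {v}) then 1 else 0)"
    by (rule sum.swap)
  also have "\<dots> = (\<Sum>w\<in>{0..<n}. card {v\<in>S. w \<in> cn n F (S - {v})})"
    by (rule sum.cong) (auto simp: sum.inter_filter[OF fS, symmetric])
  also have "\<dots> \<le> (\<Sum>w\<in>{0..<n}. 1 + s * (if w \<in> cn n F S then 1 else 0))"
    by (rule sum_mono) (use perw[OF S] in fastforce)
  also have "\<dots> = n + s * card (cn n F S)"
    unfolding sum.distrib by (simp add: sum_distrib_left[symmetric] c)
  finally show ?thesis .
qed

lemma two_ab_le: "2 * ((a::real) * b) \<le> a^2 + b^2"
proof -
  have "0 \<le> (a - b)^2" by simp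
  thus ?thesis by (simp add: power2_diff)
qed

lemma cs_real:
  fixes f :: "'a \<Rightarrow> real"
  assumes "finite A"
  shows "(\<Sum>x\<in>A. f x)^2 \<le> real (card A) * (\<Sum>x\<in>A. (f x)^2)"
proof -
  have "(\<Sum>x\<in>A. f x)^2 = (\<Sum>x\<in>A. \<Sum>y\<in>A. f x * f y)"
    by (simp add: power2_eq_square sum_product)
  hence "2 * (\<Sum>x\<in>A. f x)^2 = (\<Sum>x\<in>A. \<Sum>y\<in>A. 2 * (f x * f y))"
    by (simp add: sum_distrib_left)
  also have "\<dots> \<le> (\<Sum>x\<in>A. \<Sum>y\<in>A. (f x)^2 + (f y)^2)"
    by (intro sum_mono) (rule two_ab_le)
  also have "\<dots> = 2 * (real (card A) * (\<Sum>x\<in>A. (f x)^2))"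
    by (simp add: sum.distrib sum_distrib_left[symmetric] sum.swap[of "\<lambda>x y. (f y)^2"])
  finally show ?thesis by simp
qed

lemma MM:
  assumes sym: "\<And>u v. F u v = F v u"
  shows "(real (Suc s) * real (card (clq n F (Suc s))))^2
     \<le> real (card (clq n F s)) * (real n * real (card (clq n F (Suc s)))
         + real s * (real s + 2) * real (card (clq n F (Suc (Suc s)))))"
proof -
  have sum1: "(\<Sum>R\<in>clq n F t. card (cn n F R)) = Suc t * card (clq n F (Suc t))" for t
  proof -
    have "(\<Sum>R\<in>clq n F t. card (cn n F R)) = (\<Sum>R\<in>clq n F t. \<Sum>v\<in>cn n F R. (\<lambda>_ _. 1::nat) R v)"
      by simp
    also have "\<dots> = (\<Sum>S\<in>clq n F (Suc t). \<Sum>v\<in>S. (\<lambda>_ _. 1::nat) (S - {v}) v)"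
      by (rule L1[OF sym])
    also have "\<dots> = (\<Sum>S\<in>clq n F (Suc t). Suc t)"
      by (rule sum.cong) (auto simp: clq_def)
    finally show ?thesis by simp
  qed
  have sum2: "(\<Sum>R\<in>clq n F s. card (cn n F R) * card (cn n F R))
      \<le> n * card (clq n F (Suc s)) + s * (Suc (Suc s) * card (clq n F (Suc (Suc s))))"
  proof -
    have "(\<Sum>R\<in>clq n F s. card (cn n F R) * card (cn n F R))
        = (\<Sum>R\<in>clq n F s. \<Sum>v\<in>cn n F R. (\<lambda>R v. card (cn n F R)) R v)"
      by simp
    also have "\<dots> = (\<Sum>S\<in>clq n F (Suc s). \<Sum>v\<in>S. card (cn n F (S - {v})))"
      by (rule L1[OF sym])
    also have "\<dots> \<le> (\<Sum>S\<in>clq n F (Suc s). n + s * card (cn n F S))"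
      by (rule sum_mono) (rule perS)
    also have "\<dots> = n * card (clq n F (Suc s)) + s * (\<Sum>S\<in>clq n F (Suc s). card (cn n F S))"
      by (simp add: sum.distrib sum_distrib_left)
    also have "\<dots> = n * card (clq n F (Suc s)) + s * (Suc (Suc s) * card (clq n F (Suc (Suc s))))"
      by (simp only: sum1)
    finally show ?thesis .
  qed
  have e1: "(real (Suc s) * real (card (clq n F (Suc s))))^2 = (\<Sum>R\<in>clq n F s. real (card (cn n F R)))^2"
    using sum1[of s] by (metis of_nat_mult of_nat_sum)
  have e2: "(\<Sum>R\<in>clq n F s. real (card (cn n F R)))^2 \<le> real (card (clq n F s)) * (\<Sum>R\<in>clq n F s. (real (card (cn n F R)))^2)"
    by (rule cs_real[OF finite_clq])
  have e3: "(\<Sum>R\<in>clq n F s. (real (card (cn n F R)))^2) = real (\<Sum>R\<in>clq n F s. card (cn n F R) * card (cn n F R))"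
    by (simp add: power2_eq_square)
  have e4: "real (\<Sum>R\<in>clq n F s. card (cn n F R) * card (cn n F R)) \<le> real n * real (card (clq n F (Suc s)))
         + real s * (real s + 2) * real (card (clq n F (Suc (Suc s))))"
  proof -
    have "real (\<Sum>R\<in>clq n F s. card (cn n F R) * card (cn n F R)) \<le> real (n * card (clq n F (Suc s)) + s * (Suc (Suc s) * card (clq n F (Suc (Suc s)))))"
      using sum2 by linarith
    also have "\<dots> = real n * real (card (clq n F (Suc s)))
         + real s * (real s + 2) * real (card (clq n F (Suc (Suc s))))"
      by (simp add: algebra_simps)
    finally show ?thesis .
  qed
  show ?thesis using e1 e2 e3 e4 mult_left_mono[OF e4, of "real (card (clq n F s))"] by simp
qed



lemma chain_step_alg:
  fixes a b c N x :: real and t :: nat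
  assumes a: "a > 0" and b: "b > 0" and t: "t \<ge> 1" and N: "N > 0"
    and h: "(real t + 1) * b \<ge> N * a * (1 - real t * x)"
    and mm: "((real t + 1) * b)^2 \<le> a * (N * b + real t * (real t + 2) * c)"
  shows "(real t + 2) * c \<ge> N * b * (1 - (real t + 1) * x)"
proof -
  have e1: "((real t + 1) * b)^2 - N * a * b \<le> real t * (real t + 2) * a * c"
    using mm by (simp add: algebra_simps)
  have e2: "((real t + 1) * b)^2 - N * a * b = b * ((real t + 1) * ((real t + 1) * b) - N * a)"
    by (simp add: power2_eq_square algebra_simps)
  have e3: "b * ((real t + 1) * (N * a * (1 - real t * x)) - N * a) \<le> b * ((real t + 1) * ((real t + 1) * b) - N * a)"
    using h b by (intro mult_left_mono) (auto intro: mult_left_mono)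
  have e4: "b * ((real t + 1) * (N * a * (1 - real t * x)) - N * a) = (real t * a) * (N * b * (1 - (real t + 1) * x))"
    by (simp add: algebra_simps)
  have "(real t * a) * (N * b * (1 - (real t + 1) * x)) \<le> (real t * a) * ((real t + 2) * c)"
    using e1 e2 e3 e4 by (simp add: algebra_simps)
  moreover have "real t * a > 0" using a t by simp
  ultimately show ?thesis using mult_le_cancel_left_pos by blast
qed

lemma chain:
  fixes k :: "nat \<Rightarrow> real" and N x :: real and r :: nat
  assumes N: "N > 0" and k1: "k 1 = N" and k2: "2 * k 2 \<ge> N * N * (1 - x)"
    and MM: "\<And>s. (real (Suc s) * k (Suc s))^2 \<le> k s * (N * k (Suc s) + real s * (real s + 2) * k (Suc (Suc s)))"
    and r: "r \<ge> 1" and rx: "real r * x < 1"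
  shows "(real r + 1) * k (r + 1) \<ge> N * (N / real r)^r * (1 - real r * x)"
proof -
  have tx: "real t * x < 1" if "t \<le> r" for t
  proof (cases "x \<ge> 0")
    case True
    have "real t * x \<le> real r * x" using that True by (simp add: mult_right_mono)
    thus ?thesis using rx by simp
  next
    case False
    hence "real t * x \<le> 0" by (simp add: mult_nonneg_nonpos)
    thus ?thesis by simp
  qed
  have step: "1 \<le> t \<longrightarrow> t \<le> r \<longrightarrow> k t > 0 \<and> (real t + 1) * k (t + 1) \<ge> N * k t * (1 - real t * x)" for t
  proof (induction t)
    case 0 then show ?case by simp
  next
    case (Suc t)
    show ?case
    proof (intro impI)
      assume "1 \<le> Suc t" "Suc t \<le> r"
      show "k (Suc t) > 0 \<and> (real (Suc t) + 1) * k (Suc t + 1) \<ge> N * k (Suc t) * (1 - real (Suc t) * x)"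
      proof (cases "t = 0")
        case True
        thus ?thesis using N k1 k2 by (simp add: algebra_simps numeral_2_eq_2)
      next
        case False
        hence t1: "1 \<le> t" and tr: "t \<le> r" using \<open>Suc t \<le> r\<close> by auto
        from Suc.IH t1 tr have a: "k t > 0" and h: "(real t + 1) * k (t + 1) \<ge> N * k t * (1 - real t * x)" by auto
        have "1 - real t * x > 0" using tx[OF tr] by simp
        hence "N * k t * (1 - real t * x) > 0" using N a by simp
        hence "(real t + 1) * k (t + 1) > 0" using h by linarith
        hence b: "k (Suc t) > 0" by (smt (verit) of_nat_0_le_iff zero_less_mult_iff Suc_eq_plus1)
        have mm: "((real t + 1) * k (Suc t))^2 \<le> k t * (N * k (Suc t) + real t * (real t + 2) * k (Suc (Suc t)))"
          using MM[of t] by (simp add: add.commute)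
        have "(real t + 2) * k (Suc (Suc t)) \<ge> N * k (Suc t) * (1 - (real t + 1) * x)"
          by (rule chain_step_alg[OF a b t1 N _ mm]) (use h in simp)
        thus ?thesis using b by (simp add: algebra_simps)
      qed
    qed
  qed
  have rpos: "real r > 0" using r by simp
  have lower: "1 \<le> t \<longrightarrow> t \<le> r \<longrightarrow> k t \<ge> real (r choose t) * (N / real r)^t" for t
  proof (induction t)
    case 0 then show ?case by simp
  next
    case (Suc t)
    show ?case
    proof (intro impI)
      assume "1 \<le> Suc t" "Suc t \<le> r"
      show "k (Suc t) \<ge> real (r choose Suc t) * (N / real r)^Suc t"
      proof (cases "t = 0")
        case True
        thus ?thesis using k1 rpos by simp
      next
        case False
        hence t1: "1 \<le> t" and tr: "t \<le> r" and tlr: "t < r" using \<open>Suc t \<le> r\<close> by auto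
        from Suc.IH t1 tr have IH: "k t \<ge> real (r choose t) * (N / real r)^t" by auto
        from step[of t] t1 tr have h: "(real t + 1) * k (t + 1) \<ge> N * k t * (1 - real t * x)" and kt: "k t > 0" by auto
        have xr: "x \<le> 1 / real r" using rx rpos by (simp add: field_simps)
        have "real t * x \<le> real t * (1 / real r)" by (rule mult_left_mono[OF xr]) simp
        hence f: "1 - real t * x \<ge> (real r - real t) / real r" using rpos by (simp add: field_simps)
        have frn: "(real r - real t) / real r \<ge> 0" using tlr by simp
        have "N * k t * (1 - real t * x) \<ge> N * (real (r choose t) * (N / real r)^t) * ((real r - real t) / real r)"
          using IH f frn N kt by (intro mult_mono) (auto intro: mult_left_mono)
        also have "N * (real (r choose t) * (N / real r)^t) * ((real r - real t) / real r)
            = (real (r - t) * real (r choose t)) * (N / real r)^Suc t"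
          using tlr rpos by (simp add: of_nat_diff field_simps)
        also have "(real (r - t) * real (r choose t)) * (N / real r)^Suc t = (real t + 1) * (real (r choose Suc t) * (N / real r)^Suc t)"
        proof -
          have "real (r - t) * real (r choose t) = real (Suc t) * real (r choose Suc t)"
            by (metis binomial_absorb_comp binomial_absorption of_nat_mult)
          thus ?thesis by (subst \<open>real (r - t) * real (r choose t) = _\<close>) (simp add: mult.assoc add.commute)
        qed
        finally have g: "N * k t * (1 - real t * x) \<ge> (real t + 1) * (real (r choose Suc t) * (N / real r)^Suc t)" .
        have h': "(real t + 1) * k (Suc t) \<ge> N * k t * (1 - real t * x)" using h by simp
        have "(real t + 1) * k (Suc t) \<ge> (real t + 1) * (real (r choose Suc t) * (N / real r)^Suc t)"
          using g h' by linarith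
        thus ?thesis by (smt (verit) mult_le_cancel_left of_nat_0_le_iff)
      qed
    qed
  qed
  from lower[of r] r have kr: "k r \<ge> (N / real r)^r" by simp
  from step[of r] r have h: "(real r + 1) * k (r + 1) \<ge> N * k r * (1 - real r * x)" by simp
  have "1 - real r * x > 0" using rx by simp
  hence "N * k r * (1 - real r * x) \<ge> N * (N / real r)^r * (1 - real r * x)"
    using kr N by (intro mult_right_mono mult_left_mono) auto
  with h show ?thesis by linarith
qed



fun Wg :: "nat \<Rightarrow> (nat \<Rightarrow> nat \<Rightarrow> real) \<Rightarrow> nat \<Rightarrow> nat \<Rightarrow> nat \<Rightarrow> real" where
  "Wg n f 0 i j = (if i = j then 1 else 0)"
| "Wg n f (Suc k) i j = (\<Sum>l\<in>{0..<n}. Wg n f k i l * f l j)"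

lemma Wg_mat:
  assumes "i < n" "j < n"
  shows "(mat n n (\<lambda>(i,j). complex_of_real (f i j)) ^\<^sub>m k) $$ (i,j) = complex_of_real (Wg n f k i j)"
  using assms
proof (induction k arbitrary: i j)
  case 0
  then show ?case by simp
next
  case (Suc k)
  let ?A = "mat n n (\<lambda>(i,j). complex_of_real (f i j))"
  have car: "?A ^\<^sub>m k \<in> carrier_mat n n" by simp
  hence dims: "dim_row (?A ^\<^sub>m k) = n" "dim_col (?A ^\<^sub>m k) = n" by auto
  have "(?A ^\<^sub>m Suc k) $$ (i,j) = row (?A ^\<^sub>m k) i \<bullet> col ?A j"
    using Suc.prems dims by simp
  also have "\<dots> = (\<Sum>l\<in>{0..<n}. (?A ^\<^sub>m k) $$ (i,l) * ?A $$ (l,j))"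
    unfolding scalar_prod_def using Suc.prems dims by (intro sum.cong) auto
  also have "\<dots> = (\<Sum>l\<in>{0..<n}. complex_of_real (Wg n f k i l * f l j))"
    using Suc.prems Suc.IH by (intro sum.cong) auto
  also have "\<dots> = complex_of_real (Wg n f (Suc k) i j)"
    by (simp add: of_real_sum)
  finally show ?case .
qed

lemma Wg_add:
  assumes "j < n"
  shows "Wg n f (p + q) i j = (\<Sum>l\<in>{0..<n}. Wg n f p i l * Wg n f q l j)"
  using assms
proof (induction q arbitrary: j)
  case 0
  then show ?case by (simp add: if_distrib cong: if_cong)
next
  case (Suc q)
  have "Wg n f (p + Suc q) i j = (\<Sum>m\<in>{0..<n}. Wg n f (p + q) i m * f m j)" by simp
  also have "\<dots> = (\<Sum>m\<in>{0..<n}. (\<Sum>l\<in>{0..<n}. Wg n f p i l * Wg n f q l m) * f m j)"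
    using Suc.IH by (intro sum.cong) auto
  also have "\<dots> = (\<Sum>l\<in>{0..<n}. Wg n f p i l * (\<Sum>m\<in>{0..<n}. Wg n f q l m * f m j))"
  proof -
    have "(\<Sum>m\<in>{0..<n}. (\<Sum>l\<in>{0..<n}. Wg n f p i l * Wg n f q l m) * f m j)
        = (\<Sum>m\<in>{0..<n}. \<Sum>l\<in>{0..<n}. Wg n f p i l * (Wg n f q l m * f m j))"
      by (simp only: sum_distrib_right mult.assoc)
    also have "\<dots> = (\<Sum>l\<in>{0..<n}. \<Sum>m\<in>{0..<n}. Wg n f p i l * (Wg n f q l m * f m j))"
      by (rule sum.swap)
    also have "\<dots> = (\<Sum>l\<in>{0..<n}. Wg n f p i l * (\<Sum>m\<in>{0..<n}. Wg n f q l m * f m j))"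
      by (simp only: sum_distrib_left)
    finally show ?thesis .
  qed
  also have "\<dots> = (\<Sum>l\<in>{0..<n}. Wg n f p i l * Wg n f (Suc q) l j)" by simp
  finally show ?case .
qed

lemma Wg_one: assumes "i < n" shows "Wg n f 1 i j = f i j"
proof -
  have "Wg n f 1 i j = (\<Sum>l\<in>{0..<n}. (if i = l then 1 else 0) * f l j)"
    by (simp add: One_nat_def)
  also have "\<dots> = (\<Sum>l\<in>{0..<n}. if l = i then f l j else 0)"
    by (rule sum.cong) auto
  also have "\<dots> = f i j" using assms by (simp add: sum.delta)
  finally show ?thesis .
qed

lemma Wg_sym:
  assumes sym: "\<And>i j. i < n \<Longrightarrow> j < n \<Longrightarrow> f i j = f j i"
  shows "i < n \<Longrightarrow> j < n \<Longrightarrow> Wg n f k i j = Wg n f k j i"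
proof (induction k arbitrary: i j)
  case 0
  then show ?case by simp
next
  case (Suc k)
  have "Wg n f (Suc k) j i = Wg n f (1 + k) j i" by simp
  also have "\<dots> = (\<Sum>l\<in>{0..<n}. Wg n f 1 j l * Wg n f k l i)"
    using Suc.prems by (intro Wg_add) simp
  also have "\<dots> = (\<Sum>l\<in>{0..<n}. Wg n f k i l * f l j)"
  proof (rule sum.cong[OF refl])
    fix l assume l: "l \<in> {0..<n}"
    have w1: "Wg n f 1 j l = f j l" using Suc.prems by (intro Wg_one) simp
    show "Wg n f 1 j l * Wg n f k l i = Wg n f k i l * f l j"
      unfolding w1 using Suc.IH[of l i] sym[of j l] l Suc.prems by simp
  qed
  also have "\<dots> = Wg n f (Suc k) i j" by simp
  finally show ?case by simp
qed

lemma Wg_scale: "Wg n (\<lambda>i j. f i j / c) k i j = Wg n f k i j / c ^ k"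
proof (induction k arbitrary: j)
  case 0
  then show ?case by simp
next
  case (Suc k)
  then show ?case by (simp add: sum_divide_distrib mult.commute)
qed

lemma Wg_nonneg: "(\<And>i j. f i j \<ge> 0) \<Longrightarrow> Wg n f k i j \<ge> 0"
  by (induction k arbitrary: j) (auto intro!: sum_nonneg)

lemma cs_real':
  fixes f :: "'a \<Rightarrow> real"
  assumes "finite A"
  shows "(\<Sum>x\<in>A. f x)^2 \<le> real (card A) * (\<Sum>x\<in>A. (f x)^2)"
proof -
  have ab: "2 * ((a::real) * b) \<le> a^2 + b^2" for a b
  proof -
    have "0 \<le> (a - b)^2" by simp
    thus ?thesis by (simp add: power2_diff)
  qed
  have "(\<Sum>x\<in>A. f x)^2 = (\<Sum>x\<in>A. \<Sum>y\<in>A. f x * f y)"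
    by (simp add: power2_eq_square sum_product)
  hence "2 * (\<Sum>x\<in>A. f x)^2 = (\<Sum>x\<in>A. \<Sum>y\<in>A. 2 * (f x * f y))"
    by (simp add: sum_distrib_left)
  also have "\<dots> \<le> (\<Sum>x\<in>A. \<Sum>y\<in>A. (f x)^2 + (f y)^2)"
    by (intro sum_mono) (rule ab)
  also have "\<dots> = 2 * (real (card A) * (\<Sum>x\<in>A. (f x)^2))"
    by (simp add: sum.distrib sum_distrib_left[symmetric] sum.swap[of "\<lambda>x y. (f y)^2"])
  finally show ?thesis by simp
qed

definition wsum :: "nat \<Rightarrow> (nat \<Rightarrow> nat \<Rightarrow> real) \<Rightarrow> nat \<Rightarrow> real" where
  "wsum n f k = (\<Sum>i\<in>{0..<n}. \<Sum>j\<in>{0..<n}. Wg n f k i j)"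

lemma wsum_double:
  assumes sym: "\<And>i j. i < n \<Longrightarrow> j < n \<Longrightarrow> f i j = f j i"
  shows "(wsum n f k)^2 \<le> real n * wsum n f (k + k)"
proof -
  let ?r = "\<lambda>l. \<Sum>j\<in>{0..<n}. Wg n f k l j"
  have "wsum n f (k + k) = (\<Sum>i\<in>{0..<n}. \<Sum>j\<in>{0..<n}. \<Sum>l\<in>{0..<n}. Wg n f k i l * Wg n f k l j)"
    unfolding wsum_def by (intro sum.cong refl) (simp add: Wg_add)
  also have "\<dots> = (\<Sum>i\<in>{0..<n}. \<Sum>l\<in>{0..<n}. Wg n f k i l * ?r l)"
  proof (rule sum.cong[OF refl])
    fix i
    have "(\<Sum>j\<in>{0..<n}. \<Sum>l\<in>{0..<n}. Wg n f k i l * Wg n f k l j)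
        = (\<Sum>l\<in>{0..<n}. \<Sum>j\<in>{0..<n}. Wg n f k i l * Wg n f k l j)"
      by (rule sum.swap)
    also have "\<dots> = (\<Sum>l\<in>{0..<n}. Wg n f k i l * ?r l)"
      by (simp only: sum_distrib_left)
    finally show "(\<Sum>j\<in>{0..<n}. \<Sum>l\<in>{0..<n}. Wg n f k i l * Wg n f k l j) = (\<Sum>l\<in>{0..<n}. Wg n f k i l * ?r l)" .
  qed
  also have "\<dots> = (\<Sum>l\<in>{0..<n}. \<Sum>i\<in>{0..<n}. Wg n f k i l * ?r l)"
    by (rule sum.swap)
  also have "\<dots> = (\<Sum>l\<in>{0..<n}. (\<Sum>i\<in>{0..<n}. Wg n f k i l) * ?r l)"
    by (simp only: sum_distrib_right)
  also have "\<dots> = (\<Sum>l\<in>{0..<n}. (?r l)^2)"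
  proof (intro sum.cong refl)
    fix l assume l: "l \<in> {0..<n}"
    have "(\<Sum>i\<in>{0..<n}. Wg n f k i l) = ?r l"
      using l by (intro sum.cong refl) (auto intro: Wg_sym[OF sym])
    thus "(\<Sum>i\<in>{0..<n}. Wg n f k i l) * (\<Sum>j\<in>{0..<n}. Wg n f k l j) = (?r l)^2"
      by (simp add: power2_eq_square)
  qed
  finally have e: "wsum n f (k + k) = (\<Sum>l\<in>{0..<n}. (?r l)^2)" .
  have "(wsum n f k)^2 = (\<Sum>l\<in>{0..<n}. ?r l)^2" unfolding wsum_def ..
  also have "\<dots> \<le> real (card {0..<n}) * (\<Sum>l\<in>{0..<n}. (?r l)^2)"
    by (rule cs_real') simp
  finally show ?thesis using e by simp
qed

lemma wsum_pow2:
  assumes sym: "\<And>i j. i < n \<Longrightarrow> j < n \<Longrightarrow> f i j = f j i"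
    and nn: "\<And>i j. f i j \<ge> 0" and n: "n > 0"
  shows "wsum n f (2^j) \<ge> real n * (wsum n f 1 / real n) ^ (2^j)"
proof (induction j)
  case 0
  then show ?case using n by simp
next
  case (Suc j)
  let ?d = "wsum n f 1 / real n"
  have d0: "?d \<ge> 0" unfolding wsum_def using nn by (auto intro!: sum_nonneg divide_nonneg_nonneg Wg_nonneg)
  have "(real n * ?d ^ (2^j))^2 \<le> (wsum n f (2^j))^2"
    using Suc.IH d0 n by (intro power_mono) auto
  also have "\<dots> \<le> real n * wsum n f (2^j + 2^j)" by (rule wsum_double[OF sym])
  finally have le: "(real n * ?d ^ (2^j))^2 \<le> real n * wsum n f (2^j + 2^j)" .
  have p: "?d ^ (2^Suc j) = (?d ^ (2^j))^2"
    by (simp only: power_mult[symmetric] power_Suc mult.commute)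
  have e: "(real n * ?d ^ (2^j))^2 = real n * (real n * ?d ^ (2^Suc j))"
    unfolding p by (simp only: power2_eq_square mult_ac)
  have q: "(2::nat)^Suc j = 2^j + 2^j" by simp
  have "real n * (real n * ?d ^ (2^Suc j)) \<le> real n * wsum n f (2^Suc j)"
    using le unfolding e q .
  thus ?case using n by simp
qed



lemma avg_le_sr:
  assumes n: "n > 0" and sym: "\<And>i j. i < n \<Longrightarrow> j < n \<Longrightarrow> E i j = E j i"
  shows "wsum n (\<lambda>i j. if E i j then 1 else 0) 1 / real n \<le> graph_spectral_radius n E"
proof (rule ccontr)
  define a where "a = (\<lambda>i j. if E i j then 1 else (0::real))"
  define A where "A = adj_matrix n E"
  define \<rho> where "\<rho> = spectral_radius A"
  define d where "d = wsum n a 1 / real n"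
  assume "\<not> ?thesis"
  hence lt: "\<rho> < d" unfolding \<rho>_def d_def A_def a_def graph_spectral_radius_def by simp
  have Acar: "A \<in> carrier_mat n n" by (simp add: A_def adj_matrix_def)
  have Aeq: "A = mat n n (\<lambda>(i,j). complex_of_real (a i j))"
    unfolding A_def adj_matrix_def a_def by (intro eq_matI) auto
  have \<rho>0: "0 \<le> \<rho>" using spectral_radius_mem_max(1)[OF Acar n] unfolding \<rho>_def by auto
  define c where "c = (\<rho> + d) / 2"
  have c0: "c > 0" "\<rho> < c" "c < d" using lt \<rho>0 unfolding c_def by auto
  define B where "B = mat n n (\<lambda>(i,j). complex_of_real (a i j / c))"
  have Bcar: "B \<in> carrier_mat n n" by (simp add: B_def)
  have srB: "spectral_radius B < 1"
  proof -
    obtain ev where ev: "ev \<in> spectrum B" "spectral_radius B = norm ev"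
      using spectral_radius_mem_max(1)[OF Bcar n] by auto
    from ev(1) obtain v where evec: "eigenvector B v ev" unfolding spectrum_def eigenvalue_def by auto
    hence v: "v \<in> carrier_vec n" "v \<noteq> 0\<^sub>v n" "B *\<^sub>v v = ev \<cdot>\<^sub>v v"
      unfolding eigenvector_def using Bcar by auto
    have Av: "A *\<^sub>v v = (complex_of_real c * ev) \<cdot>\<^sub>v v"
    proof (rule eq_vecI)
      fix i assume "i < dim_vec ((complex_of_real c * ev) \<cdot>\<^sub>v v)"
      hence i: "i < n" using v by auto
      have "(A *\<^sub>v v) $ i = (\<Sum>l\<in>{0..<n}. complex_of_real (a i l) * v $ l)"
        using i v unfolding Aeq by (auto simp: scalar_prod_def intro!: sum.cong)
      also have "\<dots> = complex_of_real c * (\<Sum>l\<in>{0..<n}. complex_of_real (a i l / c) * v $ l)"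
        using c0 by (simp add: sum_distrib_left)
      also have "(\<Sum>l\<in>{0..<n}. complex_of_real (a i l / c) * v $ l) = (B *\<^sub>v v) $ i"
        using i v(1) unfolding B_def by (auto simp: scalar_prod_def intro!: sum.cong)
      also have "\<dots> = (ev \<cdot>\<^sub>v v) $ i" by (simp only: v(3))
      also have "\<dots> = ev * v $ i" using i v by simp
      finally show "(A *\<^sub>v v) $ i = ((complex_of_real c * ev) \<cdot>\<^sub>v v) $ i" using i v by simp
    next
      show "dim_vec (A *\<^sub>v v) = dim_vec ((complex_of_real c * ev) \<cdot>\<^sub>v v)" using v Acar by simp
    qed
    hence "eigenvector A v (complex_of_real c * ev)" unfolding eigenvector_def using v Acar by auto
    hence "eigenvalue A (complex_of_real c * ev)" unfolding eigenvalue_def by auto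
    hence "norm (complex_of_real c * ev) \<le> \<rho>"
      using spectral_radius_mem_max(2)[OF Acar n] unfolding \<rho>_def spectrum_def by auto
    hence "c * norm ev \<le> \<rho>" using c0 by (simp add: norm_mult)
    hence "c * norm ev < c * 1" using c0 by linarith
    hence "norm ev < 1" using c0 by (simp only: mult_less_cancel_left_pos)
    thus ?thesis using ev by simp
  qed
  obtain C where C: "\<And>k. norm_bound (B ^\<^sub>m k) C"
    using spectral_radius_jnf_norm_bound_less_1_upper_triangular[OF Bcar srB] by auto
  have wb: "wsum n a k / c^k \<le> real n * real n * C" for k
  proof -
    have ent: "Wg n a k i j / c^k \<le> C" if ij: "i < n" "j < n" for i j
    proof -
      have "(B ^\<^sub>m k) $$ (i,j) = complex_of_real (Wg n (\<lambda>i j. a i j / c) k i j)"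
        unfolding B_def using ij by (rule Wg_mat)
      also have "\<dots> = complex_of_real (Wg n a k i j / c^k)" by (simp add: Wg_scale)
      finally have eq: "(B ^\<^sub>m k) $$ (i,j) = complex_of_real (Wg n a k i j / c^k)" .
      have "B ^\<^sub>m k \<in> carrier_mat n n" using Bcar by simp
      hence "norm ((B ^\<^sub>m k) $$ (i,j)) \<le> C" using C[of k] ij Bcar unfolding norm_bound_def by auto
      hence "\<bar>Wg n a k i j / c^k\<bar> \<le> C" unfolding eq norm_of_real .
      thus ?thesis using abs_ge_self[of "Wg n a k i j / c^k"] by linarith
    qed
    have "wsum n a k / c^k = (\<Sum>i\<in>{0..<n}. \<Sum>j\<in>{0..<n}. Wg n a k i j / c^k)"
      unfolding wsum_def by (simp add: sum_divide_distrib)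
    also have "\<dots> \<le> (\<Sum>i\<in>{0..<n}. \<Sum>j\<in>{0..<n}. C)" using ent by (intro sum_mono) auto
    also have "\<dots> = real n * real n * C" by simp
    finally show ?thesis .
  qed
  have sym_a: "\<And>i j. i < n \<Longrightarrow> j < n \<Longrightarrow> a i j = a j i" unfolding a_def using sym by auto
  have nn_a: "\<And>i j. a i j \<ge> 0" unfolding a_def by auto
  have bnd: "(d / c)^(2^j) \<le> real n * C" for j
  proof -
    have "real n * d^(2^j) \<le> wsum n a (2^j)" using wsum_pow2[OF sym_a nn_a n] unfolding d_def .
    hence "real n * d^(2^j) / c^(2^j) \<le> wsum n a (2^j) / c^(2^j)"
      using c0 by (intro divide_right_mono) auto
    also have "\<dots> \<le> real n * real n * C" by (rule wb)
    finally have "real n * (d / c)^(2^j) \<le> real n * (real n * C)"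
      by (simp add: power_divide mult.assoc)
    thus ?thesis using n by simp
  qed
  define q where "q = d / c - 1"
  have q0: "q > 0" using c0 unfolding q_def by (simp add: field_simps)
  obtain j where j: "real n * C < real j * q" using ex_less_of_nat_mult[OF q0] by blast
  have "1 + real (2^j) * q \<le> (1 + q)^(2^j)" by (rule Bernoulli_inequality) (use q0 in simp)
  also have "(1 + q) = d / c" unfolding q_def by simp
  finally have b1: "1 + real (2^j) * q \<le> (d / c)^(2^j)" .
  have "real j \<le> real (2^j)" by (simp add: less_imp_le)
  hence "real j * q \<le> real (2^j) * q" using q0 by (simp add: mult_right_mono)
  with b1 bnd[of j] j show False by linarith
qed



theorem theorem2p4:
  fixes n \<alpha> :: nat and E :: "nat \<Rightarrow> nat \<Rightarrow> bool"
  assumes "simple_graph n E"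
    and "\<alpha> \<ge> 2"
    and "graph_spectral_radius n E \<le> real n / real \<alpha>"
  shows "real (num_indep_sets n E \<alpha>) \<ge>
    (1 / (real \<alpha> * (real \<alpha> - 1)) - 1 / real n) * ((real \<alpha> - 1) * (real \<alpha> - 2) / real \<alpha>)
      * (real n / (real \<alpha> - 1)) ^ \<alpha>"
proof -
  define \<delta> where "\<delta> = 1 / (real \<alpha> * (real \<alpha> - 1)) - 1 / real n"
  have al: "real \<alpha> \<ge> 2" using assms(2) by simp
  have G: "\<And>u v. u < n \<Longrightarrow> v < n \<Longrightarrow> E u v = E v u" "\<And>v. v < n \<Longrightarrow> \<not> E v v"
    using assms(1) unfolding simple_graph_def by auto
  show ?thesis
  proof (cases "n = 0 \<or> \<delta> \<le> 0")
    case True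
    have f2: "(real \<alpha> - 1) * (real \<alpha> - 2) / real \<alpha> \<ge> 0" using al by simp
    have "\<delta> * ((real \<alpha> - 1) * (real \<alpha> - 2) / real \<alpha>) * (real n / (real \<alpha> - 1)) ^ \<alpha> \<le> 0"
    proof (cases "n = 0")
      case True
      thus ?thesis using assms(2) by (simp add: power_0_left)
    next
      case False
      with \<open>n = 0 \<or> \<delta> \<le> 0\<close> have "\<delta> \<le> 0" by simp
      moreover have "(real n / (real \<alpha> - 1)) ^ \<alpha> \<ge> 0" using al by simp
      ultimately show ?thesis using f2
        by (intro mult_nonpos_nonneg) (auto intro: mult_nonpos_nonneg)
    qed
    thus ?thesis unfolding \<delta>_def by (smt (verit) of_nat_0_le_iff)
  next
    case False
    hence n0: "n > 0" and d0: "\<delta> > 0" by auto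
    define F where "F = (\<lambda>u v. u < n \<and> v < n \<and> u \<noteq> v \<and> \<not> E u v)"
    have symF: "\<And>u v. F u v = F v u" unfolding F_def using G by auto
    define k where "k = (\<lambda>t. real (card (clq n F t)))"
    have indep: "num_indep_sets n E \<alpha> = card (clq n F \<alpha>)"
    proof -
      have "{S. independent_set n E S \<and> card S = \<alpha>} = clq n F \<alpha>"
      proof (intro equalityI subsetI)
        fix S assume "S \<in> {S. independent_set n E S \<and> card S = \<alpha>}"
        thus "S \<in> clq n F \<alpha>" unfolding independent_set_def clq_def F_def by auto
      next
        fix S assume S: "S \<in> clq n F \<alpha>"
        show "S \<in> {S. independent_set n E S \<and> card S = \<alpha>}"
          using S G(2) unfolding independent_set_def clq_def F_def by fastforce
      qed
      thus ?thesis unfolding num_indep_sets_def by simp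
    qed
    have k1: "k 1 = real n"
    proof -
      have "clq n F 1 = (\<lambda>u. {u}) ` {0..<n}"
        unfolding clq_def by (auto simp: card_1_singleton_iff)
      moreover have "inj_on (\<lambda>u. {u}) {0..<n}" by (auto simp: inj_on_def)
      ultimately show ?thesis unfolding k_def by (simp add: card_image)
    qed
    define a where "a = (\<lambda>i j. if E i j then 1 else (0::real))"
    have sum1: "(\<Sum>R\<in>clq n F 1. card (cn n F R)) = 2 * card (clq n F 2)"
    proof -
      have "(\<Sum>R\<in>clq n F 1. card (cn n F R)) = (\<Sum>R\<in>clq n F 1. \<Sum>v\<in>cn n F R. (\<lambda>_ _. 1::nat) R v)"
        by simp
      also have "\<dots> = (\<Sum>S\<in>clq n F (Suc 1). \<Sum>v\<in>S. (\<lambda>_ _. 1::nat) (S - {v}) v)"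
        by (rule L1[OF symF])
      also have "\<dots> = (\<Sum>S\<in>clq n F 2. 2)"
        by (rule sum.cong) (auto simp: clq_def)
      finally show ?thesis by simp
    qed
    have peru: "real (card (cn n F {u})) = real n - 1 - (\<Sum>w\<in>{0..<n}. a u w)" if u: "u < n" for u
    proof -
      have A: "cn n F {u} = {w\<in>{0..<n}. w \<noteq> u \<and> \<not> E u w}" unfolding cn_def F_def using u by auto
      have B: "{0..<n} - {u} = {w\<in>{0..<n}. w \<noteq> u \<and> \<not> E u w} \<union> {w\<in>{0..<n}. E u w}"
        using G(2)[OF u] by auto
      have "card ({0..<n} - {u}) = card {w\<in>{0..<n}. w \<noteq> u \<and> \<not> E u w} + card {w\<in>{0..<n}. E u w}"
        unfolding B by (rule card_Un_disjoint) auto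
      moreover have "card ({0..<n} - {u}) = n - 1" using u by simp
      moreover have "(\<Sum>w\<in>{0..<n}. a u w) = real (card {w\<in>{0..<n}. E u w})"
      proof -
        have "real (card {w\<in>{0..<n}. E u w}) = (\<Sum>w\<in>{w\<in>{0..<n}. E u w}. 1)" by simp
        also have "\<dots> = (\<Sum>w\<in>{0..<n}. if E u w then 1 else 0)" by (rule sum.inter_filter) simp
        finally show ?thesis unfolding a_def by simp
      qed
      ultimately show ?thesis unfolding A using n0 by (simp add: of_nat_diff)
    qed
    have D: "2 * k 2 = real n * (real n - 1) - wsum n a 1"
    proof -
      have "2 * k 2 = real (\<Sum>R\<in>clq n F 1. card (cn n F R))" unfolding k_def sum1 by simp
      also have "clq n F 1 = (\<lambda>u. {u}) ` {0..<n}"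
        unfolding clq_def by (auto simp: card_1_singleton_iff)
      also have "real (\<Sum>R\<in>(\<lambda>u. {u}) ` {0..<n}. card (cn n F R)) = (\<Sum>u\<in>{0..<n}. real (card (cn n F {u})))"
        by (subst sum.reindex) (auto simp: inj_on_def)
      also have "\<dots> = (\<Sum>u\<in>{0..<n}. real n - 1 - (\<Sum>w\<in>{0..<n}. a u w))"
        by (rule sum.cong) (auto simp: peru)
      also have "\<dots> = real n * (real n - 1) - wsum n a 1"
      proof -
        have "wsum n a 1 = (\<Sum>u\<in>{0..<n}. \<Sum>w\<in>{0..<n}. a u w)"
          unfolding wsum_def by (intro sum.cong refl) (metis Wg_one atLeastLessThan_iff)
        thus ?thesis by (simp add: sum_subtractf)
      qed
      finally show ?thesis .
    qed
    have W0: "wsum n a 1 / real n \<le> graph_spectral_radius n E"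
      unfolding a_def by (rule avg_le_sr[OF n0]) (rule G(1))
    have W: "wsum n a 1 / real n \<le> real n / real \<alpha>"
      using W0 assms(3) by linarith
    hence W': "wsum n a 1 \<le> real n * real n / real \<alpha>" using n0 by (simp add: field_simps)
    define x where "x = 1 - 2 * k 2 / (real n * real n)"
    have k2: "2 * k 2 \<ge> real n * real n * (1 - x)" unfolding x_def using n0 by simp
    have xb: "x \<le> 1 / real n + 1 / real \<alpha>"
    proof -
      have "2 * k 2 \<ge> real n * (real n - 1) - real n * real n / real \<alpha>" using D W' by linarith
      hence "2 * k 2 / (real n * real n) \<ge> (real n * (real n - 1) - real n * real n / real \<alpha>) / (real n * real n)"
        using n0 by (intro divide_right_mono) auto
      also have "(real n * (real n - 1) - real n * real n / real \<alpha>) / (real n * real n) = 1 - 1 / real n - 1 / real \<alpha>"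
        using n0 al by (simp add: field_simps)
      finally show ?thesis unfolding x_def by simp
    qed
    define r where "r = \<alpha> - 1"
    have rr: "real r = real \<alpha> - 1" "r \<ge> 1" "r + 1 = \<alpha>" using assms(2) unfolding r_def by auto
    have rx: "1 - real r * x \<ge> real r * \<delta>"
    proof -
      have "real r * x \<le> real r * (1 / real n + 1 / real \<alpha>)" using xb rr by (intro mult_left_mono) auto
      moreover have "1 - real r * (1 / real n + 1 / real \<alpha>) = real r * \<delta>"
        unfolding \<delta>_def rr(1) using al n0 by (simp add: field_simps)
      ultimately show ?thesis by linarith
    qed
    have rxl: "real r * x < 1"
    proof -
      have "real r * \<delta> > 0" using rr d0 by simp
      thus ?thesis using rx by linarith
    qed
    have MMk: "\<And>s. (real (Suc s) * k (Suc s))^2 \<le> k s * (real n * k (Suc s) + real s * (real s + 2) * k (Suc (Suc s)))"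
      unfolding k_def by (rule MM[OF symF])
    have ch: "(real r + 1) * k (r + 1) \<ge> real n * (real n / real r)^r * (1 - real r * x)"
      using n0 k1 k2 MMk rr(2) rxl by (intro chain) auto
    define P where "P = (real n / real r) ^ \<alpha>"
    have P0: "P \<ge> 0" unfolding P_def by simp
    have nP: "real n * (real n / real r)^r = real r * P"
      unfolding P_def using rr by (simp flip: rr(3))
    have "real \<alpha> * k \<alpha> \<ge> real r * P * (real r * \<delta>)"
    proof -
      have "real n * (real n / real r)^r * (1 - real r * x) \<ge> real n * (real n / real r)^r * (real r * \<delta>)"
        using rx by (intro mult_left_mono) auto
      moreover have "(real r + 1) * k (r + 1) = real \<alpha> * k \<alpha>" using rr(1,3) by simp
      moreover have "real n * (real n / real r)^r * (real r * \<delta>) = real r * P * (real r * \<delta>)"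
        by (simp only: nP)
      ultimately show ?thesis using ch by linarith
    qed
    hence ka: "k \<alpha> \<ge> real r * real r * \<delta> * P / real \<alpha>"
      using al by (simp add: field_simps)
    have "\<delta> * ((real \<alpha> - 1) * (real \<alpha> - 2) / real \<alpha>) * (real n / (real \<alpha> - 1)) ^ \<alpha>
        = real r * (real r - 1) * \<delta> * P / real \<alpha>"
      unfolding P_def rr(1) by (simp add: field_simps)
    also have "\<dots> \<le> real r * real r * \<delta> * P / real \<alpha>"
      using d0 P0 al rr by (intro divide_right_mono mult_right_mono) auto
    also have "\<dots> \<le> k \<alpha>" by (rule ka)
    finally show ?thesis unfolding \<delta>_def k_def indep by simp
  qed
qed

end
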